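(* Let $X \subset \mathbb{R}^d$ be a closed set and let $\mu$ be an admissible, $X$-indeterminate measure. Then there exists $\epsilon >0$ such that for every admissible measure $\sigma$ supported on $X$ with total mass $\sigma(X)<\epsilon$, the measure $\mu + \sigma$ is admissible and $X$-indeterminate.
   Context: An admissible measure on a closed set $X \subseteq \mathbb{R}^d$ is a positive Radon measure supported on $X$ with all polynomials integrable. $\mu$ is $X$-indeterminate if some admissible measure on $X$ distinct from $\mu$ has the same integrals against all polynomials. *)

theory Defs
  imports "HOL-Analysis.Analysis"
begin

definition monomial :: "('d::finite \<Rightarrow> nat) \<Rightarrow> real^'d \<Rightarrow> real" where
  "monomial \<alpha> x = (\<Prod>i\<in>UNIV. (x $ i) ^ (\<alpha> i))"

definition polynomial_functions :: "(real^'d::finite \<Rightarrow> real) set" where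
  "polynomial_functions = {p. \<exists>A c. finite A \<and> p = (\<lambda>x. \<Sum>\<alpha>\<in>A. c \<alpha> * monomial \<alpha> x)}"

text \<open>Positive Radon measure on R^d: Borel measure, finite on compact sets
  (on R^d such measures are automatically regular).\<close>
definition radon_measure :: "(real^'d::finite) measure \<Rightarrow> bool" where
  "radon_measure M \<longleftrightarrow> sets M = sets borel \<and> (\<forall>K. compact K \<longrightarrow> emeasure M K < \<infinity>)"

definition supported_on :: "(real^'d::finite) measure \<Rightarrow> (real^'d) set \<Rightarrow> bool" where
  "supported_on M X \<longleftrightarrow> emeasure M (UNIV - X) = 0"

definition admissible :: "(real^'d::finite) set \<Rightarrow> (real^'d) measure \<Rightarrow> bool" where
  "admissible X M \<longleftrightarrow> radon_measure M \<and> supported_on M X \<and>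
     (\<forall>p\<in>polynomial_functions. integrable M p)"

definition X_indeterminate :: "(real^'d::finite) set \<Rightarrow> (real^'d) measure \<Rightarrow> bool" where
  "X_indeterminate X M \<longleftrightarrow> (\<exists>N. admissible X N \<and> N \<noteq> M \<and>
     (\<forall>p\<in>polynomial_functions. integral\<^sup>L N p = integral\<^sup>L M p))"

definition measure_add :: "'a measure \<Rightarrow> 'a measure \<Rightarrow> 'a measure" where
  "measure_add M N = measure_of (space M) (sets M) (\<lambda>A. emeasure M A + emeasure N A)"

end

theory Submission imports Defs begin

lemma ma_sets: "sets (measure_add M N) = sets M"
  unfolding measure_add_def by simp
lemma ma_space: "space (measure_add M N) = space M"
  unfolding measure_add_def by simp

lemma ma_emeasure:
  assumes "sets N = sets M" "A \<in> sets M"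
  shows "emeasure (measure_add M N) A = emeasure M A + emeasure N A"
  unfolding measure_add_def
proof (rule emeasure_measure_of_sigma)
  show "sigma_algebra (space M) (sets M)" by (rule sets.sigma_algebra_axioms)
  show "positive (sets M) (\<lambda>A. emeasure M A + emeasure N A)"
    by (simp add: positive_def assms)
  show "countably_additive (sets M) (\<lambda>A. emeasure M A + emeasure N A)"
  proof (unfold countably_additive_def, intro allI impI)
    fix F :: "nat \<Rightarrow> _" assume F: "range F \<subseteq> sets M" "disjoint_family F" "\<Union> (range F) \<in> sets M"
    have F': "range F \<subseteq> sets N" using F assms by simp
    have "(\<Sum>i. emeasure M (F i) + emeasure N (F i)) = (\<Sum>i. emeasure M (F i)) + (\<Sum>i. emeasure N (F i))"
      by (rule suminf_add[symmetric]) auto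
    also have "\<dots> = emeasure M (\<Union> (range F)) + emeasure N (\<Union> (range F))"
      using suminf_emeasure[OF F(1,2)] suminf_emeasure[OF F' F(2)] by simp
    finally show "(\<Sum>i. emeasure M (F i) + emeasure N (F i)) = emeasure M (\<Union> (range F)) + emeasure N (\<Union> (range F))" .
  qed
  show "A \<in> sets M" by fact
qed

lemma ma_nn:
  assumes N: "sets N = sets M" and f: "f \<in> borel_measurable M"
  shows "(\<integral>\<^sup>+x. f x \<partial>measure_add M N) = (\<integral>\<^sup>+x. f x \<partial>M) + (\<integral>\<^sup>+x. f x \<partial>N)"
  using f
proof induct
  case (cong f g)
  have sN: "space N = space M" using N sets_eq_imp_space_eq by blast
  have "(\<integral>\<^sup>+x. f x \<partial>measure_add M N) = (\<integral>\<^sup>+x. g x \<partial>measure_add M N)"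
    by (rule nn_integral_cong) (simp add: ma_space cong)
  moreover have "(\<integral>\<^sup>+x. f x \<partial>M) = (\<integral>\<^sup>+x. g x \<partial>M)"
    by (rule nn_integral_cong) (simp add: cong)
  moreover have "(\<integral>\<^sup>+x. f x \<partial>N) = (\<integral>\<^sup>+x. g x \<partial>N)"
    by (rule nn_integral_cong) (simp add: sN cong)
  ultimately show ?case using cong by simp
next
  case (set A)
  then show ?case using N by (simp add: ma_emeasure ma_sets)
next
  case (mult u c)
  have m1: "u \<in> borel_measurable (measure_add M N)" using mult measurable_cong_sets[OF ma_sets refl] by blast
  have m2: "u \<in> borel_measurable N" using mult measurable_cong_sets[OF N refl] by blast
  show ?case using mult m1 m2 by (simp add: nn_integral_cmult distrib_left)
next
  case (add u v)
  have m1: "u \<in> borel_measurable (measure_add M N)" "v \<in> borel_measurable (measure_add M N)"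
    using add measurable_cong_sets[OF ma_sets refl] by blast+
  have m2: "u \<in> borel_measurable N" "v \<in> borel_measurable N" using add measurable_cong_sets[OF N refl] by blast+
  show ?case using add m1 m2 by (simp add: nn_integral_add algebra_simps)
next
  case (seq U)
  have m1: "U i \<in> borel_measurable (measure_add M N)" for i
    using seq measurable_cong_sets[OF ma_sets refl] by blast
  have m2: "U i \<in> borel_measurable N" for i using seq measurable_cong_sets[OF N refl] by blast
  have inc: "incseq (\<lambda>i. integral\<^sup>N K (U i))" for K
    using seq(4) by (auto simp: incseq_def le_fun_def intro!: nn_integral_mono)
  have "(\<integral>\<^sup>+x. (SUP i. U i) x \<partial>K) = (SUP i. integral\<^sup>N K (U i))"
    if "\<And>i. U i \<in> borel_measurable K" for K
    unfolding SUP_apply using nn_integral_monotone_convergence_SUP[OF seq(4) that] by simp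
  note * = this[OF seq(1)] this[OF m1] this[OF m2]
  show ?case unfolding * using seq(3) ennreal_SUP_add[OF inc inc] by simp
qed

lemma ma_integral:
  fixes f :: "'a \<Rightarrow> real"
  assumes N: "sets N = sets M" and fM: "integrable M f" and fN: "integrable N f"
  shows "integrable (measure_add M N) f \<and>
         integral\<^sup>L (measure_add M N) f = integral\<^sup>L M f + integral\<^sup>L N f"
proof -
  have fm: "f \<in> borel_measurable M" using fM by auto
  have fm': "f \<in> borel_measurable (measure_add M N)"
    using fm measurable_cong_sets[OF ma_sets refl] by blast
  have p: "(\<lambda>x. ennreal (f x)) \<in> borel_measurable M" "(\<lambda>x. ennreal (- f x)) \<in> borel_measurable M"
    using fm by measurable
  note e1 = ma_nn[OF N p(1)] and e2 = ma_nn[OF N p(2)]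
  have fin: "(\<integral>\<^sup>+ x. ennreal (f x) \<partial>M) < \<infinity>" "(\<integral>\<^sup>+ x. ennreal (- f x) \<partial>M) < \<infinity>"
    "(\<integral>\<^sup>+ x. ennreal (f x) \<partial>N) < \<infinity>" "(\<integral>\<^sup>+ x. ennreal (- f x) \<partial>N) < \<infinity>"
    using fM fN unfolding real_integrable_def by (auto simp: less_top)
  have I: "integrable (measure_add M N) f"
    unfolding real_integrable_def using fm' e1 e2 fin by auto
  show ?thesis
    using I fM fN e1 e2 fin
    by (simp add: real_lebesgue_integral_def enn2real_plus)
qed

lemma admissible_add:
  fixes X :: "(real^'d::finite) set"
  assumes X: "closed X" and M: "admissible X M" and N: "admissible X N"
  shows "admissible X (measure_add M N)"
proof -
  have sM: "sets M = sets borel" and sN: "sets N = sets M"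
    using M N by (auto simp: admissible_def radon_measure_def)
  show ?thesis
    unfolding admissible_def radon_measure_def supported_on_def
  proof (intro conjI allI impI ballI)
    show "sets (measure_add M N) = sets borel" by (simp add: ma_sets sM)
  next
    fix K :: "(real ^ 'd) set" assume "compact K"
    hence "K \<in> sets M" using sM by (simp add: compact_imp_closed)
    then show "emeasure (measure_add M N) K < \<infinity>"
      using \<open>compact K\<close> M N sN by (simp add: ma_emeasure admissible_def radon_measure_def)
  next
    have "UNIV - X \<in> sets M" using sM X by (simp add: open_Diff)
    then show "emeasure (measure_add M N) (UNIV - X) = 0"
      using M N sN by (simp add: ma_emeasure admissible_def supported_on_def)
  next
    fix p :: "real^'d \<Rightarrow> real" assume "p \<in> polynomial_functions"
    then show "integrable (measure_add M N) p"
      using ma_integral[OF sN] M N by (simp add: admissible_def)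
  qed
qed

theorem mainTheorem14:
  fixes X :: "(real^'d::finite) set" and \<mu> :: "(real^'d) measure"
  assumes "closed X"
    and "admissible X \<mu>"
    and "X_indeterminate X \<mu>"
  shows "\<exists>\<epsilon>::real. \<epsilon> > 0 \<and>
    (\<forall>\<sigma>. admissible X \<sigma> \<and> emeasure \<sigma> X < ennreal \<epsilon> \<longrightarrow>
       admissible X (measure_add \<mu> \<sigma>) \<and> X_indeterminate X (measure_add \<mu> \<sigma>))"
proof (intro exI[of _ 1] conjI allI impI)
  show "(0::real) < 1" by simp
  obtain N where N: "admissible X N" "N \<noteq> \<mu>"
    "\<forall>p\<in>polynomial_functions. integral\<^sup>L N p = integral\<^sup>L \<mu> p"
    using assms(3) unfolding X_indeterminate_def by blast
  fix \<sigma> assume s: "admissible X \<sigma> \<and> emeasure \<sigma> X < ennreal 1"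
  have sm: "sets \<mu> = sets borel" "sets N = sets borel" "sets \<sigma> = sets borel"
    using assms(2) N(1) s by (auto simp: admissible_def radon_measure_def)
  show A: "admissible X (measure_add \<mu> \<sigma>)"
    using admissible_add[OF assms(1,2)] s by blast
  show "X_indeterminate X (measure_add \<mu> \<sigma>)"
    unfolding X_indeterminate_def
  proof (intro exI[of _ "measure_add N \<sigma>"] conjI ballI)
    show "admissible X (measure_add N \<sigma>)"
      using admissible_add[OF assms(1) N(1)] s by blast
  next
    show "measure_add N \<sigma> \<noteq> measure_add \<mu> \<sigma>"
    proof
      assume eq: "measure_add N \<sigma> = measure_add \<mu> \<sigma>"
      have Xs: "X \<in> sets \<sigma>" "UNIV - X \<in> sets \<sigma>" using sm assms(1) by (auto simp: open_Diff)
      have "emeasure \<sigma> (X \<union> (UNIV - X)) \<le> emeasure \<sigma> X + emeasure \<sigma> (UNIV - X)"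
        using Xs by (rule emeasure_subadditive)
      also have "\<dots> < \<infinity>" using s by (auto simp: admissible_def supported_on_def less_top[symmetric] dest: order.strict_trans[OF _ ennreal_less_top])
      finally have fin: "emeasure \<sigma> UNIV < \<infinity>" by simp
      have "N = \<mu>"
      proof (rule measure_eqI)
        show "sets N = sets \<mu>" using sm by simp
        fix A assume A: "A \<in> sets N"
        have "emeasure \<sigma> A \<le> emeasure \<sigma> UNIV"
          by (rule emeasure_mono) (use sm in auto)
        hence fA: "emeasure \<sigma> A \<noteq> \<infinity>" using fin by auto
        have "emeasure N A + emeasure \<sigma> A = emeasure \<mu> A + emeasure \<sigma> A"
          using arg_cong[OF eq, of "\<lambda>M. emeasure M A"] A sm
          by (simp add: ma_emeasure)
        then show "emeasure N A = emeasure \<mu> A"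
          using fA by (metis add.commute ennreal_add_left_cancel)
      qed
      with N(2) show False by simp
    qed
  next
    fix p :: "real^'d \<Rightarrow> real" assume p: "p \<in> polynomial_functions"
    have i: "integrable \<mu> p" "integrable N p" "integrable \<sigma> p"
      using assms(2) N(1) s p by (auto simp: admissible_def)
    have "sets \<sigma> = sets N" "sets \<sigma> = sets \<mu>" using sm by auto
    then show "integral\<^sup>L (measure_add N \<sigma>) p = integral\<^sup>L (measure_add \<mu> \<sigma>) p"
      using ma_integral[of \<sigma> N p] ma_integral[of \<sigma> \<mu> p] i N(3) p by simp
  qed
qed

end
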